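(* For the system below, the Kelvin theorem for the fluid circulation alone is $$\frac{d}{dt}\oint_{c(\widehat{\mathbf{v}})}\widehat{\mathbf{v}}\cdot d\mathbf{r}=\oint_{c(\widehat{\mathbf{v}})}\frac12 d|\widehat{\mathbf{v}}|^2-\frac{\sigma^2}{2}\widetilde{w}^2\,d\big(1+\epsilon\sigma^2|\nabla_{\mathbf{r}}\zeta|^2\big)^2-\frac{2\epsilon\sigma^4}{D}\mathrm{div}\big(D\widetilde{w}(\widehat{w}\nabla_{\mathbf{r}}\zeta)\big)\,d\zeta,$$ where $c(\widehat{\mathbf{v}})$ is a closed material loop moving with velocity $\widehat{\mathbf{v}}$.
   Context: On a free surface $z=\zeta(\mathbf{r},t)$ over horizontal coordinates $\mathbf{r}=(x,y)$, consider the augmented classical water-wave equations (ACWWE) for the horizontal transport velocity $\widehat{\mathbf{v}}$, areal density $D$, elevation $\zeta$ and vertical velocity $\widehat{w}$, with aspect ratio $\sigma$, Froude number $Fr$ and constant $0\le\epsilon\le1$: $(\partial_t+\mathcal{L}_{\widehat{\mathbf{v}}})(\widehat{\mathbf{v}}\cdot d\mathbf{x}+\sigma^2\widetilde{w}\,d\zeta)=d\varpi$; $\partial_tD+\mathrm{div}_{\mathbf{r}}(D\widehat{\mathbf{v}})=0$; $\partial_t\zeta+\widehat{\mathbf{v}}\cdot\nabla_{\mathbf{r}}\zeta=\widehat{w}(1+\epsilon\sigma^2|\nabla_{\mathbf{r}}\zeta|^2)$; $\partial_t\widetilde{w}+\widehat{\mathbf{v}}\cdot\nabla_{\mathbf{r}}\widetilde{w}=-1/(\sigma^2Fr^2)+(2\epsilon\sigma^2/D)\,\mathrm{div}(D\widetilde{w}\,\widehat{w}\,\nabla_{\mathbf{r}}\zeta)$,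 where $\varpi=\tfrac12(|\widehat{\mathbf{v}}|^2+\sigma^2\widehat{w}^2)-\zeta/Fr^2$ and $\widetilde{w}=\widehat{w}/(1+\epsilon\sigma^2|\nabla_{\mathbf{r}}\zeta|^2)$. $\mathcal{L}_{\widehat{\mathbf{v}}}$ denotes the Lie derivative along $\widehat{\mathbf{v}}$. *)

theory Defs
  imports "HOL-Analysis.Analysis"
begin

text \<open>Space-time fields are functions of time t :: real and a point x of some
 real normed vector space (here real^2 for the horizontal plane, real for loop parameter).\<close>

definition pdir :: "'a::real_normed_vector \<Rightarrow> (real \<Rightarrow> 'a \<Rightarrow> real) \<Rightarrow> real \<Rightarrow> 'a \<Rightarrow> real" where
  "pdir u f t x = deriv (\<lambda>h. f t (x + h *\<^sub>R u)) 0"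

definition ptime :: "(real \<Rightarrow> 'a \<Rightarrow> real) \<Rightarrow> real \<Rightarrow> 'a \<Rightarrow> real" where
  "ptime f t x = deriv (\<lambda>s. f s x) t"

primrec Ck :: "'a::real_normed_vector set \<Rightarrow> nat \<Rightarrow> (real \<Rightarrow> 'a \<Rightarrow> real) \<Rightarrow> bool" where
  "Ck U 0 f = continuous_on UNIV (\<lambda>p. f (fst p) (snd p))"
| "Ck U (Suc k) f = (continuous_on UNIV (\<lambda>p. f (fst p) (snd p))
      \<and> (\<forall>t x. (\<lambda>s. f s x) differentiable (at t)
             \<and> (\<forall>u\<in>U. (\<lambda>h. f t (x + h *\<^sub>R u)) differentiable (at 0)))
      \<and> Ck U k (ptime f) \<and> (\<forall>u\<in>U. Ck U k (pdir u f)))"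

definition smooth_st :: "'a::real_normed_vector set \<Rightarrow> (real \<Rightarrow> 'a \<Rightarrow> real) \<Rightarrow> bool" where
  "smooth_st U f \<longleftrightarrow> (\<forall>k. Ck U k f)"

abbreviation Basis2 :: "(real^2) set" where
  "Basis2 \<equiv> {axis i 1 | i. True}"

definition grad :: "(real \<Rightarrow> real^2 \<Rightarrow> real) \<Rightarrow> real \<Rightarrow> real^2 \<Rightarrow> real^2" where
  "grad f t x = (\<chi> i. pdir (axis i 1) f t x)"

definition divg :: "(real \<Rightarrow> real^2 \<Rightarrow> real^2) \<Rightarrow> real \<Rightarrow> real^2 \<Rightarrow> real" where
  "divg F t x = (\<Sum>i\<in>UNIV. pdir (axis i 1) (\<lambda>s y. F s y $ i) t x)"

definition ptimev :: "(real \<Rightarrow> real^2 \<Rightarrow> real^2) \<Rightarrow> real \<Rightarrow> real^2 \<Rightarrow> real^2" where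
  "ptimev F t x = (\<chi> i. ptime (\<lambda>s y. F s y $ i) t x)"

definition lie1 :: "(real \<Rightarrow> real^2 \<Rightarrow> real^2) \<Rightarrow> (real \<Rightarrow> real^2 \<Rightarrow> real^2) \<Rightarrow> real \<Rightarrow> real^2 \<Rightarrow> real^2" where
  "lie1 v \<alpha> t x = (\<chi> i. \<Sum>j\<in>UNIV.
      v t x $ j * pdir (axis j 1) (\<lambda>s y. \<alpha> s y $ i) t x
    + \<alpha> t x $ j * pdir (axis i 1) (\<lambda>s y. v s y $ j) t x)"

definition Phi :: "real \<Rightarrow> real \<Rightarrow> (real \<Rightarrow> real^2 \<Rightarrow> real) \<Rightarrow> real \<Rightarrow> real^2 \<Rightarrow> real" where
  "Phi \<sigma> \<epsilon> \<zeta> t x = 1 + \<epsilon> * \<sigma>^2 * (norm (grad \<zeta> t x))^2"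

definition wtil :: "real \<Rightarrow> real \<Rightarrow> (real \<Rightarrow> real^2 \<Rightarrow> real) \<Rightarrow> (real \<Rightarrow> real^2 \<Rightarrow> real) \<Rightarrow> real \<Rightarrow> real^2 \<Rightarrow> real" where
  "wtil \<sigma> \<epsilon> \<zeta> w t x = w t x / Phi \<sigma> \<epsilon> \<zeta> t x"

definition loop_int :: "(real \<Rightarrow> real^2 \<Rightarrow> real^2) \<Rightarrow> (real \<Rightarrow> real \<Rightarrow> real^2) \<Rightarrow> real \<Rightarrow> real" where
  "loop_int \<omega> c t = integral {0..1} (\<lambda>s. \<omega> t (c t s) \<bullet> vector_derivative (c t) (at s))"

end

theory Submission
  imports Defs
begin

lemma sm_Ck: "smooth_st U f \<Longrightarrow> Ck U k f" by (simp add: smooth_st_def)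

lemma sm_cont: "smooth_st U f \<Longrightarrow> continuous_on UNIV (\<lambda>p. f (fst p) (snd p))"
  using sm_Ck[of U f 0] by simp

lemma sm_dt: "smooth_st U f \<Longrightarrow> (\<lambda>s. f s x) differentiable (at t)"
  using sm_Ck[of U f 1] by simp

lemma sm_dx: "smooth_st U f \<Longrightarrow> u \<in> U \<Longrightarrow> (\<lambda>h. f t (x + h *\<^sub>R u)) differentiable (at 0)"
  using sm_Ck[of U f 1] by simp

lemma sm_ptime: "smooth_st U f \<Longrightarrow> smooth_st U (ptime f)"
  unfolding smooth_st_def by (metis Ck.simps(2))

lemma sm_pdir: "smooth_st U f \<Longrightarrow> u \<in> U \<Longrightarrow> smooth_st U (pdir u f)"
  unfolding smooth_st_def by (metis Ck.simps(2))

lemma sm_contat: "smooth_st U f \<Longrightarrow> continuous (at p) (\<lambda>p. f (fst p) (snd p))"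
  using sm_cont[of U f] by (metis continuous_on_eq_continuous_at open_UNIV UNIV_I)

lemma ptime_DERIV: "smooth_st U f \<Longrightarrow> ((\<lambda>s. f s x) has_real_derivative ptime f t x) (at t)"
  unfolding ptime_def using sm_dt DERIV_deriv_iff_real_differentiable by blast

lemma pdir_DERIV0: "smooth_st U f \<Longrightarrow> u \<in> U \<Longrightarrow>
   ((\<lambda>h. f t (x + h *\<^sub>R u)) has_real_derivative pdir u f t x) (at 0)"
  unfolding pdir_def using sm_dx DERIV_deriv_iff_real_differentiable by blast

lemma line_shift:
  fixes x u :: "'a::real_vector"
  assumes "((\<lambda>h. g (x + a *\<^sub>R u + h *\<^sub>R u)) has_real_derivative D) (at 0)"
  shows "((\<lambda>h. g (x + h *\<^sub>R u)) has_real_derivative D) (at a)"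
proof -
  have e: "\<And>h. x + (h + a) *\<^sub>R u = x + a *\<^sub>R u + h *\<^sub>R u"
    by (simp add: scaleR_add_left algebra_simps)
  have "((\<lambda>h. g (x + (h + a) *\<^sub>R u)) has_real_derivative D) (at 0)"
    using assms by (simp only: e)
  then show ?thesis using DERIV_shift[of "\<lambda>h. g (x + h *\<^sub>R u)" D 0 a] by simp
qed

lemma pdir_DERIV: "smooth_st U f \<Longrightarrow> u \<in> U \<Longrightarrow>
   ((\<lambda>h. f t (x + h *\<^sub>R u)) has_real_derivative pdir u f t (x + a *\<^sub>R u)) (at a)"
  by (rule line_shift[where g="f t"]) (rule pdir_DERIV0)

lemma ptime_DERIV_eq: "((\<lambda>s. f s x) has_real_derivative D) (at t) \<Longrightarrow> ptime f t x = D"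
  unfolding ptime_def by (rule DERIV_imp_deriv)

lemma pdir_DERIV_eq: "((\<lambda>h. f t (x + h *\<^sub>R u)) has_real_derivative D) (at 0) \<Longrightarrow> pdir u f t x = D"
  unfolding pdir_def by (rule DERIV_imp_deriv)

lemma cont_comp:
  assumes "continuous_on UNIV (\<lambda>p. F (fst p) (snd p))" "continuous_on S g"
  shows "continuous_on S (\<lambda>x. F (fst (g x)) (snd (g x)))"
  using continuous_on_compose[OF assms(2) continuous_on_subset[OF assms(1)]] by (simp add: o_def)

section \<open>Clairaut\<close>

lemma clairaut:
  fixes F Fa Fb Fab :: "real \<Rightarrow> real \<Rightarrow> real"
  assumes da: "\<And>a b. ((\<lambda>a. F a b) has_real_derivative Fa a b) (at a)"
    and db: "\<And>a b. ((\<lambda>b. F a b) has_real_derivative Fb a b) (at b)"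
    and dab: "\<And>a b. ((\<lambda>b. Fa a b) has_real_derivative Fab a b) (at b)"
    and c: "continuous_on UNIV (\<lambda>p. Fab (fst p) (snd p))"
  shows "((\<lambda>a. Fb a b) has_real_derivative Fab a b) (at a)"
proof -
  define a0 where "a0 = a - 1"
  have int: "((\<lambda>r. Fa r b) has_integral (F y b - F a0 b)) {a0..y}" if "a0 \<le> y" for y b
    using that
    by (intro fundamental_theorem_of_calculus)
       (auto simp: has_real_derivative_iff_has_vector_derivative[symmetric]
             intro!: DERIV_subset[OF da])
  have Ieq: "F y b = F a0 b + integral {a0..y} (\<lambda>r. Fa r b)" if "a0 \<le> y" for y b
    using integral_unique[OF int[OF that]] by simp
  have c0: "continuous_on UNIV (\<lambda>p. Fab (snd p) (fst p))"
    using cont_comp[OF c, of UNIV "\<lambda>p. (snd p, fst p)"] continuous_on_swap by (simp add: prod.swap_def) blast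
  have cswap: "continuous_on S (\<lambda>(x, t). Fab t x)" for S
    using continuous_on_subset[OF c0, of S] by (simp add: case_prod_unfold)
  have L: "((\<lambda>b. integral {a0..y} (\<lambda>r. Fa r b)) has_real_derivative integral {a0..y} (\<lambda>r. Fab r b)) (at b)"
    if "a0 \<le> y" for y b
    using leibniz_rule_field_derivative[of UNIV a0 y "\<lambda>b r. Fa r b" "\<lambda>b r. Fab r b" b]
      int[OF that] cswap
    by (auto simp: box_real has_integral_integrable dab)
  have Fbeq: "Fb y b = Fb a0 b + integral {a0..y} (\<lambda>r. Fab r b)" if "a0 \<le> y" for y b
  proof -
    have "((\<lambda>b. F a0 b + integral {a0..y} (\<lambda>r. Fa r b)) has_real_derivative
        Fb a0 b + integral {a0..y} (\<lambda>r. Fab r b)) (at b)"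
      by (intro DERIV_add db L that)
    moreover have "(\<lambda>b. F a0 b + integral {a0..y} (\<lambda>r. Fa r b)) = (\<lambda>b. F y b)"
      using Ieq[OF that] by auto
    ultimately show ?thesis using DERIV_unique db by metis
  qed
  have cr: "continuous_on {a0..a+1} (\<lambda>r. Fab r b)"
    using cont_comp[OF c, of "{a0..a+1}" "\<lambda>r. (r, b)"] by (simp add: continuous_on_Pair continuous_on_id continuous_on_const)
  have "((\<lambda>y. integral {a0..y} (\<lambda>r. Fab r b)) has_real_derivative Fab a b) (at a within {a0..a+1})"
    by (rule integral_has_real_derivative[OF cr]) (auto simp: a0_def)
  then have "((\<lambda>y. integral {a0..y} (\<lambda>r. Fab r b)) has_real_derivative Fab a b) (at a)"
    using at_within_Icc_at[of a0 a "a+1"] by (simp add: a0_def)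
  then have "((\<lambda>y. Fb a0 b + integral {a0..y} (\<lambda>r. Fab r b)) has_real_derivative Fab a b) (at a)"
    using DERIV_add[OF DERIV_const[of "Fb a0 b" "at a"]] by (simp only: add_0_left)
  then show ?thesis
    by (rule has_field_derivative_transform_within_open[where S="{a0<..}"])
       (auto simp: a0_def, metis Fbeq a0_def less_imp_le)
qed

section \<open>Spatial and joint derivatives\<close>

lemma vec2_decomp: "(y::real^2) = x + (y - x)$1 *\<^sub>R axis 1 1 + (y - x)$2 *\<^sub>R axis 2 1"
  by (simp add: vec_eq_iff forall_2 axis_def)

lemma vec2_decomp': "x + (y$1 - x$1) *\<^sub>R axis 1 1 + (y$2 - x$2) *\<^sub>R axis 2 1 = (y::real^2)"
  by (simp add: vec_eq_iff forall_2 axis_def)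

lemma Basis_vec2: "(j::real^2) \<in> Basis \<Longrightarrow> j = axis 1 1 \<or> j = axis 2 1"
  by (auto simp: Basis_vec_def) (metis exhaust_2)

lemma spatial_deriv:
  fixes g g1 g2 :: "real^2 \<Rightarrow> real"
  assumes d1: "\<And>y. ((\<lambda>h. g (y + h *\<^sub>R axis 1 1)) has_real_derivative g1 y) (at 0)"
    and d2: "\<And>y. ((\<lambda>h. g (y + h *\<^sub>R axis 2 1)) has_real_derivative g2 y) (at 0)"
    and c2: "continuous_on UNIV g2"
  shows "(g has_derivative (\<lambda>k. k$1 * g1 x + k$2 * g2 x)) (at x)"
proof -
  define G where "G a b = g (x + a *\<^sub>R axis 1 1 + b *\<^sub>R axis 2 1)" for a b
  have fx: "((\<lambda>a. G a 0) has_derivative (\<lambda>h. g1 x * h)) (at 0 within UNIV)"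
    using d1[of x] by (simp add: G_def has_field_derivative_def)
  have fy: "(G a has_derivative blinfun_apply (blinfun_mult_right (g2 (x + a *\<^sub>R axis 1 1 + b *\<^sub>R axis 2 1)))) (at b within UNIV)" for a b
  proof -
    have "((\<lambda>h. g (x + a *\<^sub>R axis 1 1 + h *\<^sub>R axis 2 1)) has_real_derivative g2 (x + a *\<^sub>R axis 1 1 + b *\<^sub>R axis 2 1)) (at b)"
      by (rule line_shift) (rule d2)
    then show ?thesis unfolding G_def[abs_def] has_field_derivative_def blinfun_mult_right.rep_eq by simp
  qed
  have c0: "continuous_on UNIV (\<lambda>p::real\<times>real. g2 (x + fst p *\<^sub>R axis 1 1 + snd p *\<^sub>R axis 2 1))"
    by (rule continuous_on_compose2[OF c2]) (auto intro!: continuous_intros)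
  have "continuous (at (0,0)) (\<lambda>p::real\<times>real. g2 (x + fst p *\<^sub>R axis 1 1 + snd p *\<^sub>R axis 2 1))"
    using continuous_on_eq_continuous_at[OF open_UNIV] c0 by blast
  then have cy: "continuous (at (0,0) within UNIV \<times> UNIV) (\<lambda>(a, b). blinfun_mult_right (g2 (x + a *\<^sub>R axis 1 1 + b *\<^sub>R axis 2 1)))"
    using bounded_linear.continuous[OF bounded_linear_blinfun_mult_right] by (simp add: case_prod_unfold)
  have P: "((\<lambda>(a, b). G a b) has_derivative (\<lambda>(ta, tb). g1 x * ta + g2 x * tb)) (at (0,0))"
    using has_derivative_partialsI[OF fx fy cy] by (simp add: blinfun_mult_right.rep_eq)
  define L where "L = (\<lambda>k::real^2. (k$1, k$2))"
  have bL: "bounded_linear L"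
    unfolding L_def by (auto simp: linear_conv_bounded_linear[symmetric] intro!: linearI)
  have psi: "((\<lambda>y. L y - L x) has_derivative L) (at x)"
    using has_derivative_diff[OF bounded_linear_imp_has_derivative[OF bL] has_derivative_const] by simp
  have psi0: "L x - L x = (0,0)" by (simp add: zero_prod_def)
  have C: "((\<lambda>(a, b). G a b) \<circ> (\<lambda>y. L y - L x) has_derivative (\<lambda>(ta, tb). g1 x * ta + g2 x * tb) \<circ> L) (at x)"
    using diff_chain_at[OF psi, unfolded psi0, OF P] .
  have e1: "(\<lambda>(a, b). G a b) \<circ> (\<lambda>y. L y - L x) = g"
  proof
    fix y
    show "((\<lambda>(a, b). G a b) \<circ> (\<lambda>y. L y - L x)) y = g y"
      by (simp add: L_def G_def vec2_decomp')
  qed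
  have e2: "(\<lambda>(ta, tb). g1 x * ta + g2 x * tb) \<circ> L = (\<lambda>k. k$1 * g1 x + k$2 * g2 x)"
    by (auto simp: L_def)
  show ?thesis using C unfolding e1 e2 .
qed

lemma joint_deriv:
  fixes f :: "real \<Rightarrow> real^2 \<Rightarrow> real"
  assumes sm: "smooth_st Basis2 f"
  shows "((\<lambda>(s, y). f s y) has_derivative
     (\<lambda>(dt, dy). dt * ptime f t x + (dy$1 * pdir (axis 1 1) f t x + dy$2 * pdir (axis 2 1) f t x))) (at (t, x))"
proof -
  have B: "axis i 1 \<in> Basis2" for i :: 2 by blast
  have bl: "bounded_linear (\<lambda>k::real^2. k$1 * a + k$2 * b)" for a b :: real
    by (auto simp: linear_conv_bounded_linear[symmetric] algebra_simps intro!: linearI)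
  define L where "L s y = Blinfun (\<lambda>k::real^2. k$1 * pdir (axis 1 1) f s y + k$2 * pdir (axis 2 1) f s y)" for s y
  have Lap: "blinfun_apply (L s y) = (\<lambda>k::real^2. k$1 * pdir (axis 1 1) f s y + k$2 * pdir (axis 2 1) f s y)" for s y
    unfolding L_def by (rule bounded_linear_Blinfun_apply[OF bl])
  have fx: "((\<lambda>s. f s x) has_derivative (\<lambda>h. ptime f t x * h)) (at t within UNIV)"
    using ptime_DERIV[OF sm, of x t] by (simp add: has_field_derivative_def)
  have fy: "(f s has_derivative blinfun_apply (L s y)) (at y within UNIV)" for s y
  proof -
    have c2: "continuous_on UNIV (pdir (axis 2 1) f s)"
      using cont_comp[OF sm_cont[OF sm_pdir[OF sm B]], of UNIV "\<lambda>y. (s, y)"]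
      by (simp add: continuous_on_Pair continuous_on_id continuous_on_const)
    show ?thesis unfolding Lap
      using spatial_deriv[of "f s" "pdir (axis 1 1) f s" "pdir (axis 2 1) f s" y, OF pdir_DERIV0[OF sm B] pdir_DERIV0[OF sm B] c2]
      by simp
  qed
  have cy: "continuous (at (t, x) within UNIV \<times> UNIV) (\<lambda>(s, y). L s y)"
  proof (rule continuous_blinfun_componentwiseI)
    fix i :: real and j :: "real^2"
    assume "i \<in> Basis" "j \<in> Basis"
    then have i1: "i = 1" and j: "j = axis 1 1 \<or> j = axis 2 1" using Basis_vec2 by auto
    have c: "continuous (at (t, x)) (\<lambda>p. pdir (axis k 1) f (fst p) (snd p))" for k :: 2
      using sm_contat[OF sm_pdir[OF sm B]] .
    show "continuous (at (t, x) within UNIV \<times> UNIV) (\<lambda>p. blinfun_apply (case p of (s, y) \<Rightarrow> L s y) j \<bullet> i)"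
      using j c[of 1] c[of 2] by (auto simp: i1 Lap case_prod_unfold axis_def)
  qed
  show ?thesis
    using has_derivative_partialsI[OF fx fy cy] by (simp add: Lap mult.commute)
qed

section \<open>Chain rule along paths\<close>

lemma chain_path:
  fixes f :: "real \<Rightarrow> real^2 \<Rightarrow> real" and \<tau> :: "real \<Rightarrow> real" and p :: "real \<Rightarrow> real^2"
  assumes sm: "smooth_st Basis2 f"
    and dt: "(\<tau> has_real_derivative \<tau>') (at r)"
    and dp: "(p has_vector_derivative p') (at r)"
  shows "((\<lambda>r. f (\<tau> r) (p r)) has_real_derivative
     (\<tau>' * ptime f (\<tau> r) (p r) + (p'$1 * pdir (axis 1 1) f (\<tau> r) (p r) + p'$2 * pdir (axis 2 1) f (\<tau> r) (p r)))) (at r)"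
proof -
  have q: "((\<lambda>r. (\<tau> r, p r)) has_derivative (\<lambda>h. (\<tau>' * h, h *\<^sub>R p'))) (at r)"
    using has_derivative_Pair[OF dt[unfolded has_field_derivative_def] dp[unfolded has_vector_derivative_def]] .
  have J: "((\<lambda>(s, y). f s y) has_derivative
     (\<lambda>(dt, dy). dt * ptime f (\<tau> r) (p r) + (dy$1 * pdir (axis 1 1) f (\<tau> r) (p r) + dy$2 * pdir (axis 2 1) f (\<tau> r) (p r)))) (at (\<tau> r, p r))"
    by (rule joint_deriv[OF sm])
  show ?thesis unfolding has_field_derivative_def
    using diff_chain_at[OF q J] by (simp add: o_def) (erule has_derivative_eq_rhs, auto simp: fun_eq_iff algebra_simps)
qed

lemma vd_comp: "(f has_vector_derivative D) (at s) \<Longrightarrow> ((\<lambda>s. f s $ i) has_real_derivative D $ i) (at s)"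
  unfolding has_field_derivative_def has_vector_derivative_def
  by (rule has_derivative_eq_rhs[OF bounded_linear.has_derivative[OF bounded_linear_vec_nth]]) (auto simp: fun_eq_iff)

lemma vd_vec:
  fixes f :: "real \<Rightarrow> real^2"
  assumes "\<And>i. ((\<lambda>s. f s $ i) has_real_derivative D $ i) (at s)"
  shows "(f has_vector_derivative D) (at s)"
  unfolding has_vector_derivative_def
proof (subst has_derivative_componentwise_within, intro ballI)
  fix b :: "real^2" assume "b \<in> Basis"
  then obtain k where b: "b = axis k 1" by (auto simp: Basis_vec_def)
  show "((\<lambda>x. f x \<bullet> b) has_derivative (\<lambda>x. x *\<^sub>R D \<bullet> b)) (at s)"
    using assms[of k] unfolding has_field_derivative_def
    by (simp add: b inner_axis) (erule has_derivative_eq_rhs, simp add: fun_eq_iff)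
qed

lemma clair_time:
  fixes f :: "real \<Rightarrow> 'a::real_normed_vector \<Rightarrow> real"
  assumes sm: "smooth_st U f" and B: "u \<in> U"
  shows "pdir u (ptime f) t x = ptime (pdir u f) t x"
proof -
  define F where "F a b = f (b + t) (x + a *\<^sub>R u)" for a b
  have da: "((\<lambda>a. F a b) has_real_derivative pdir u f (b + t) (x + a *\<^sub>R u)) (at a)" for a b
    unfolding F_def by (rule pdir_DERIV[OF sm B])
  have db: "((\<lambda>b. F a b) has_real_derivative ptime f (b + t) (x + a *\<^sub>R u)) (at b)" for a b
    using DERIV_shift[of "\<lambda>s. f s (x + a *\<^sub>R u)" "ptime f (b + t) (x + a *\<^sub>R u)" b t]
      ptime_DERIV[OF sm, of "x + a *\<^sub>R u" "b + t"]
    unfolding F_def by simp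
  have dab: "((\<lambda>b. pdir u f (b + t) (x + a *\<^sub>R u)) has_real_derivative
     ptime (pdir u f) (b + t) (x + a *\<^sub>R u)) (at b)" for a b
    using DERIV_shift[of "\<lambda>s. pdir u f s (x + a *\<^sub>R u)" "ptime (pdir u f) (b + t) (x + a *\<^sub>R u)" b t]
      ptime_DERIV[OF sm_pdir[OF sm B], where x="x + a *\<^sub>R u" and t="b + t"]
    by simp
  have c: "continuous_on UNIV (\<lambda>p. ptime (pdir u f) (snd p + t) (x + fst p *\<^sub>R u))"
    using cont_comp[OF sm_cont[OF sm_ptime[OF sm_pdir[OF sm B]]], of UNIV "\<lambda>p. (snd p + t, x + fst p *\<^sub>R u)"]
    by (simp add: continuous_intros)
  have "((\<lambda>a. ptime f (0 + t) (x + a *\<^sub>R u)) has_real_derivative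
     ptime (pdir u f) (0 + t) (x + 0 *\<^sub>R u)) (at 0)"
    by (rule clairaut[where F=F, OF da db dab c])
  then show ?thesis by (intro pdir_DERIV_eq) simp
qed

lemma clair_space:
  assumes sm: "smooth_st Basis2 f"
  shows "pdir (axis j 1) (pdir (axis i 1) f) t x = pdir (axis i 1) (pdir (axis j 1) f) t x"
proof -
  have B: "axis k 1 \<in> Basis2" for k :: 2 by blast
  define F where "F a b = f t (x + a *\<^sub>R axis j 1 + b *\<^sub>R axis i 1)" for a b
  have e: "x + a *\<^sub>R axis j 1 + b *\<^sub>R axis i 1 = x + b *\<^sub>R axis i 1 + a *\<^sub>R axis j 1" for a b
    by (simp add: algebra_simps)
  have da: "((\<lambda>a. F a b) has_real_derivative pdir (axis j 1) f t (x + a *\<^sub>R axis j 1 + b *\<^sub>R axis i 1)) (at a)" for a b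
    unfolding F_def e by (rule pdir_DERIV[OF sm B])
  have db: "((\<lambda>b. F a b) has_real_derivative pdir (axis i 1) f t (x + a *\<^sub>R axis j 1 + b *\<^sub>R axis i 1)) (at b)" for a b
    unfolding F_def by (rule pdir_DERIV[OF sm B])
  have dab: "((\<lambda>b. pdir (axis j 1) f t (x + a *\<^sub>R axis j 1 + b *\<^sub>R axis i 1)) has_real_derivative
     pdir (axis i 1) (pdir (axis j 1) f) t (x + a *\<^sub>R axis j 1 + b *\<^sub>R axis i 1)) (at b)" for a b
    by (rule pdir_DERIV[OF sm_pdir[OF sm B] B])
  have c: "continuous_on UNIV (\<lambda>p. pdir (axis i 1) (pdir (axis j 1) f) t (x + fst p *\<^sub>R axis j 1 + snd p *\<^sub>R axis i 1))"
    using cont_comp[OF sm_cont[OF sm_pdir[OF sm_pdir[OF sm B] B]], of UNIV "\<lambda>p. (t, x + fst p *\<^sub>R axis j 1 + snd p *\<^sub>R axis i 1)"]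
    by (simp add: continuous_intros)
  have "((\<lambda>a. pdir (axis i 1) f t (x + a *\<^sub>R axis j 1 + 0 *\<^sub>R axis i 1)) has_real_derivative
     pdir (axis i 1) (pdir (axis j 1) f) t (x + 0 *\<^sub>R axis j 1 + 0 *\<^sub>R axis i 1)) (at 0)"
    by (rule clairaut[where F=F, OF da db dab c])
  then show ?thesis by (intro pdir_DERIV_eq) simp
qed

section \<open>Pointwise identity\<close>

lemma normsq2: "(norm (z::real^2))^2 = (z$1)^2 + (z$2)^2"
  by (subst power2_norm_eq_inner) (simp add: inner_vec_def sum_2 power2_eq_square)

lemma inner2: "(a::real^2) \<bullet> b = a$1 * b$1 + a$2 * b$2"
  by (simp add: inner_vec_def sum_2)

lemma grad_nth: "grad f t x $ k = pdir (axis k 1) f t x"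
  by (simp add: grad_def)

lemma ptime_cong: "(\<And>s. f s x = g s x) \<Longrightarrow> ptime f t x = ptime g t x"
  by (simp add: ptime_def)

lemma pdir_cong: "(\<And>h. f t (x + h *\<^sub>R u) = g t (x + h *\<^sub>R u)) \<Longrightarrow> pdir u f t x = pdir u g t x"
  by (simp add: pdir_def)

lemma T_DERIV: "(\<lambda>s. f s x) differentiable (at t) \<Longrightarrow> ((\<lambda>s. f s x) has_real_derivative ptime f t x) (at t)"
  unfolding ptime_def by (simp add: DERIV_deriv_iff_real_differentiable)

lemma X_DERIV: "(\<lambda>h. f t (x + h *\<^sub>R u)) differentiable (at 0) \<Longrightarrow>
   ((\<lambda>h. f t (x + h *\<^sub>R u)) has_real_derivative pdir u f t x) (at 0)"
  unfolding pdir_def by (simp add: DERIV_deriv_iff_real_differentiable)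

lemma alg:
  fixes a b1 b2 c1 c2 v1 v2 W ptW dW1 dW2 Zi Z1 Z2 ptZi dZ1 dZ2 N w dw P dP Dd dv Fr \<sigma> \<epsilon> :: real
  assumes s: "\<sigma> > 0" "Fr > 0" "Dd > 0"
    and E1: "a + \<sigma>^2 * (ptW * Zi + W * ptZi) + (v1 * (b1 + \<sigma>^2 * (dW1 * Zi + W * dZ1)) + (v1 + \<sigma>^2 * W * Z1) * c1
       + (v2 * (b2 + \<sigma>^2 * (dW2 * Zi + W * dZ2)) + (v2 + \<sigma>^2 * W * Z2) * c2))
       = 1/2 * (N + \<sigma>^2 * (2 * w * dw)) - Zi / Fr^2"
    and E2: "ptW + (v1 * dW1 + v2 * dW2) = - 1 / (\<sigma>^2 * Fr^2) + 2 * \<epsilon> * \<sigma>^2 / Dd * dv"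
    and E3: "ptZi + (c1 * Z1 + v1 * dZ1) + (c2 * Z2 + v2 * dZ2) = dw * P + w * dP"
    and Wd: "w = W * P"
  shows "a + (v1 * b1 + v1 * c1) + (v2 * b2 + v2 * c2)
     = 1/2 * N - \<sigma>^2 / 2 * W^2 * (2 * P * dP) - 2 * \<epsilon> * \<sigma>^4 / Dd * dv * Zi"
proof -
  have "a + (v1 * b1 + v1 * c1) + (v2 * b2 + v2 * c2)
     = (a + \<sigma>^2 * (ptW * Zi + W * ptZi) + (v1 * (b1 + \<sigma>^2 * (dW1 * Zi + W * dZ1)) + (v1 + \<sigma>^2 * W * Z1) * c1
       + (v2 * (b2 + \<sigma>^2 * (dW2 * Zi + W * dZ2)) + (v2 + \<sigma>^2 * W * Z2) * c2)))
       - \<sigma>^2 * (Zi * (ptW + (v1 * dW1 + v2 * dW2)) + W * (ptZi + (c1 * Z1 + v1 * dZ1) + (c2 * Z2 + v2 * dZ2)))"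
    by (simp add: algebra_simps)
  also have "\<dots> = (1/2 * (N + \<sigma>^2 * (2 * w * dw)) - Zi / Fr^2)
       - \<sigma>^2 * (Zi * (- 1 / (\<sigma>^2 * Fr^2) + 2 * \<epsilon> * \<sigma>^2 / Dd * dv) + W * (dw * P + w * dP))"
    by (simp only: E1 E2 E3)
  also have "\<dots> = 1/2 * N - \<sigma>^2 / 2 * W^2 * (2 * P * dP) - 2 * \<epsilon> * \<sigma>^4 / Dd * dv * Zi"
    using s unfolding Wd by (simp add: field_simps power2_eq_square power4_eq_xxxx)
  finally show ?thesis .
qed

lemma pointwise:
  fixes v :: "real \<Rightarrow> real^2 \<Rightarrow> real^2"
    and D \<zeta> w :: "real \<Rightarrow> real^2 \<Rightarrow> real"
    and \<sigma> Fr \<epsilon> :: real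
  assumes par: "\<sigma> > 0" "Fr > 0" "0 \<le> \<epsilon>"
    and smv: "\<forall>i. smooth_st Basis2 (\<lambda>t x. v t x $ i)" and smz: "smooth_st Basis2 \<zeta>"
    and smw: "smooth_st Basis2 w"
    and Dpos: "\<forall>t x. D t x > 0"
    and momentum: "\<forall>t x.
        ptimev (\<lambda>t x. v t x + (\<sigma>^2 * wtil \<sigma> \<epsilon> \<zeta> w t x) *\<^sub>R grad \<zeta> t x) t x
      + lie1 v (\<lambda>t x. v t x + (\<sigma>^2 * wtil \<sigma> \<epsilon> \<zeta> w t x) *\<^sub>R grad \<zeta> t x) t x
      = grad (\<lambda>t x. (1/2) * ((norm (v t x))^2 + \<sigma>^2 * (w t x)^2) - \<zeta> t x / Fr^2) t x"
    and kinematic: "\<forall>t x. ptime \<zeta> t x + v t x \<bullet> grad \<zeta> t x = w t x * Phi \<sigma> \<epsilon> \<zeta> t x"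
    and vertical: "\<forall>t x. ptime (wtil \<sigma> \<epsilon> \<zeta> w) t x + v t x \<bullet> grad (wtil \<sigma> \<epsilon> \<zeta> w) t x
        = - 1 / (\<sigma>^2 * Fr^2)
          + (2 * \<epsilon> * \<sigma>^2 / D t x)
            * divg (\<lambda>t x. (D t x * wtil \<sigma> \<epsilon> \<zeta> w t x * w t x) *\<^sub>R grad \<zeta> t x) t x"
  shows "ptime (\<lambda>s y. v s y $ i) t x + (v t x $ 1 * pdir (axis 1 1) (\<lambda>s y. v s y $ i) t x + v t x $ 1 * pdir (axis i 1) (\<lambda>s y. v s y $ 1) t x)
     + (v t x $ 2 * pdir (axis 2 1) (\<lambda>s y. v s y $ i) t x + v t x $ 2 * pdir (axis i 1) (\<lambda>s y. v s y $ 2) t x)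
   = ((1/2) *\<^sub>R grad (\<lambda>t x. (norm (v t x))^2) t x
        - ((\<sigma>^2 / 2) * (wtil \<sigma> \<epsilon> \<zeta> w t x)^2) *\<^sub>R grad (\<lambda>t x. (Phi \<sigma> \<epsilon> \<zeta> t x)^2) t x
        - ((2 * \<epsilon> * \<sigma>^4 / D t x)
            * divg (\<lambda>t x. (D t x * wtil \<sigma> \<epsilon> \<zeta> w t x * w t x) *\<^sub>R grad \<zeta> t x) t x)
            *\<^sub>R grad \<zeta> t x) $ i"
proof -
  let ?W = "wtil \<sigma> \<epsilon> \<zeta> w"
  let ?P = "Phi \<sigma> \<epsilon> \<zeta>"
  define Z where "Z k = pdir (axis k 1) \<zeta>" for k
  have B: "axis k 1 \<in> Basis2" for k :: 2 by blast
  have smV: "smooth_st Basis2 (\<lambda>t x. v t x $ k)" for k using smv by blast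
  have smZ: "smooth_st Basis2 (Z k)" for k unfolding Z_def by (rule sm_pdir[OF smz B])
  have smZt: "smooth_st Basis2 (ptime \<zeta>)" by (rule sm_ptime[OF smz])
  have gZ: "grad \<zeta> s y $ k = Z k s y" for s y k by (simp add: grad_nth Z_def)
  have Pe: "?P s y = 1 + \<epsilon> * \<sigma>^2 * ((Z 1 s y)^2 + (Z 2 s y)^2)" for s y
    by (simp add:  Phi_def normsq2 gZ)
  have Pge: "?P s y \<ge> 1" for s y
    unfolding Pe using par by (simp add: add_nonneg_nonneg)
  have Pnz: "?P s y \<noteq> 0" for s y using Pge[of s y] by linarith
  have We: "?W s y = w s y / (1 + \<epsilon> * \<sigma>^2 * ((Z 1 s y)^2 + (Z 2 s y)^2))" for s y
    by (simp add:  wtil_def  Pe)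
  have Pnz': "1 + \<epsilon> * \<sigma>^2 * ((Z 1 s y)^2 + (Z 2 s y)^2) \<noteq> 0" for s y using Pnz[of s y] by (simp add: Pe)
  have aT: "((\<lambda>s. g s x) has_real_derivative ptime g t x) (at t)" if "smooth_st Basis2 g" for g
    by (rule ptime_DERIV[OF that])
  have aX: "((\<lambda>h. g t (x + h *\<^sub>R axis k 1)) has_real_derivative pdir (axis k 1) g t x) (at 0)" if "smooth_st Basis2 g" for g k
    by (rule pdir_DERIV0[OF that B])
  have dT: "(\<lambda>s. g s x) differentiable (at t)" if "smooth_st Basis2 g" for g
    by (rule sm_dt[OF that])
  have dX: "(\<lambda>h. g t (x + h *\<^sub>R axis k 1)) differentiable (at 0)" if "smooth_st Basis2 g" for g k
    by (rule sm_dx[OF that B])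
  have WT: "((\<lambda>s. ?W s x) has_real_derivative ptime ?W t x) (at t)"
  proof (rule T_DERIV)
    have "(\<lambda>s. w s x / (1 + \<epsilon> * \<sigma>^2 * ((Z 1 s x)^2 + (Z 2 s x)^2))) differentiable (at t)"
      by (intro derivative_intros dT smw smZ Pnz')
    then show "(\<lambda>s. ?W s x) differentiable (at t)" by (simp add: We)
  qed
  have WX: "((\<lambda>h. ?W t (x + h *\<^sub>R axis k 1)) has_real_derivative pdir (axis k 1) ?W t x) (at 0)" for k
  proof (rule X_DERIV)
    have "(\<lambda>h. w t (x + h *\<^sub>R axis k 1) / (1 + \<epsilon> * \<sigma>^2 * ((Z 1 t (x + h *\<^sub>R axis k 1))^2 + (Z 2 t (x + h *\<^sub>R axis k 1))^2))) differentiable (at 0)"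
      by (intro derivative_intros dX smw smZ Pnz')
    then show "(\<lambda>h. ?W t (x + h *\<^sub>R axis k 1)) differentiable (at 0)" by (simp add: We)
  qed
  have PX: "((\<lambda>h. ?P t (x + h *\<^sub>R axis k 1)) has_real_derivative pdir (axis k 1) ?P t x) (at 0)" for k
  proof (rule X_DERIV)
    have "(\<lambda>h. 1 + \<epsilon> * \<sigma>^2 * ((Z 1 t (x + h *\<^sub>R axis k 1))^2 + (Z 2 t (x + h *\<^sub>R axis k 1))^2)) differentiable (at 0)"
      by (intro derivative_intros dX smZ)
    then show "(\<lambda>h. ?P t (x + h *\<^sub>R axis k 1)) differentiable (at 0)" by (simp add: Pe)
  qed
  have NX: "((\<lambda>h. (norm (v t (x + h *\<^sub>R axis k 1)))^2) has_real_derivative pdir (axis k 1) (\<lambda>t x. (norm (v t x))^2) t x) (at 0)" for k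
  proof (rule X_DERIV[where f="\<lambda>t x. (norm (v t x))^2"])
    have "(\<lambda>h. (v t (x + h *\<^sub>R axis k 1) $ 1)^2 + (v t (x + h *\<^sub>R axis k 1) $ 2)^2) differentiable (at 0)"
      using dX[OF smV[of 1], of k] dX[OF smV[of 2], of k] by (intro derivative_intros) auto
    then show "(\<lambda>h. (norm (v t (x + h *\<^sub>R axis k 1)))^2) differentiable (at 0)" by (simp add: normsq2)
  qed
  have hAt: "ptime (\<lambda>s y. (v s y + (\<sigma>^2 * ?W s y) *\<^sub>R grad \<zeta> s y) $ i) t x
     = ptime (\<lambda>s y. v s y $ i) t x + \<sigma>^2 * (ptime ?W t x * Z i t x + ?W t x * ptime (Z i) t x)"
  proof -
    have "ptime (\<lambda>s y. (v s y + (\<sigma>^2 * ?W s y) *\<^sub>R grad \<zeta> s y) $ i) t x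
        = ptime (\<lambda>s y. v s y $ i + \<sigma>^2 * ?W s y * Z i s y) t x"
      by (rule ptime_cong) (simp add: gZ)
    also have "\<dots> = ptime (\<lambda>s y. v s y $ i) t x + \<sigma>^2 * (ptime ?W t x * Z i t x + ?W t x * ptime (Z i) t x)"
      by (rule ptime_DERIV_eq)
         (auto intro!: derivative_eq_intros aT[OF smV] WT aT[OF smZ] simp: algebra_simps)
    finally show ?thesis .
  qed
  have hAx: "pdir (axis k 1) (\<lambda>s y. (v s y + (\<sigma>^2 * ?W s y) *\<^sub>R grad \<zeta> s y) $ i) t x
     = pdir (axis k 1) (\<lambda>s y. v s y $ i) t x + \<sigma>^2 * (pdir (axis k 1) ?W t x * Z i t x + ?W t x * pdir (axis k 1) (Z i) t x)" for k
  proof -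
    have "pdir (axis k 1) (\<lambda>s y. (v s y + (\<sigma>^2 * ?W s y) *\<^sub>R grad \<zeta> s y) $ i) t x
        = pdir (axis k 1) (\<lambda>s y. v s y $ i + \<sigma>^2 * ?W s y * Z i s y) t x"
      by (rule pdir_cong) (simp add: gZ)
    also have "\<dots> = pdir (axis k 1) (\<lambda>s y. v s y $ i) t x + \<sigma>^2 * (pdir (axis k 1) ?W t x * Z i t x + ?W t x * pdir (axis k 1) (Z i) t x)"
      by (rule pdir_DERIV_eq)
         (auto intro!: derivative_eq_intros aX[OF smV] WX aX[OF smZ] simp: algebra_simps)
    finally show ?thesis .
  qed
  define Nf where "Nf = (\<lambda>t x. (norm (v t x))^2)"
  have NX': "((\<lambda>h. Nf t (x + h *\<^sub>R axis k 1)) has_real_derivative pdir (axis k 1) Nf t x) (at 0)" for k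
    using NX[of k] by (simp add: Nf_def)
  have hpi: "pdir (axis i 1) (\<lambda>t x. (1/2) * ((norm (v t x))^2 + \<sigma>^2 * (w t x)^2) - \<zeta> t x / Fr^2) t x
     = 1/2 * (pdir (axis i 1) (\<lambda>t x. (norm (v t x))^2) t x + \<sigma>^2 * (2 * w t x * pdir (axis i 1) w t x)) - Z i t x / Fr^2"
  proof -
    have e: "(\<lambda>t x. (1/2) * ((norm (v t x))^2 + \<sigma>^2 * (w t x)^2) - \<zeta> t x / Fr^2)
       = (\<lambda>t x. (1/2) * (Nf t x + \<sigma>^2 * (w t x)^2) - \<zeta> t x / Fr^2)" by (simp add: Nf_def)
    have "pdir (axis i 1) (\<lambda>t x. (1/2) * (Nf t x + \<sigma>^2 * (w t x)^2) - \<zeta> t x / Fr^2) t x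
      = 1/2 * (pdir (axis i 1) Nf t x + \<sigma>^2 * (2 * w t x * pdir (axis i 1) w t x)) - Z i t x / Fr^2"
    proof (rule pdir_DERIV_eq)
      have "((\<lambda>h. 1 / 2 * (Nf t (x + h *\<^sub>R axis i 1) + \<sigma>\<^sup>2 * (w t (x + h *\<^sub>R axis i 1))\<^sup>2) - \<zeta> t (x + h *\<^sub>R axis i 1) / Fr\<^sup>2) has_real_derivative
    1 / 2 * (pdir (axis i 1) Nf t x + \<sigma>\<^sup>2 * (of_nat 2 * (pdir (axis i 1) w t x * (w t (x + 0 *\<^sub>R axis i 1))^(2 - Suc 0)))) - pdir (axis i 1) \<zeta> t x / Fr\<^sup>2) (at 0)"
        by (intro DERIV_diff DERIV_cmult DERIV_add NX' DERIV_power aX[OF smw] DERIV_cdivide aX[OF smz])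
      then show "((\<lambda>h. 1 / 2 * (Nf t (x + h *\<^sub>R axis i 1) + \<sigma>\<^sup>2 * (w t (x + h *\<^sub>R axis i 1))\<^sup>2) - \<zeta> t (x + h *\<^sub>R axis i 1) / Fr\<^sup>2) has_real_derivative
    1 / 2 * (pdir (axis i 1) Nf t x + \<sigma>\<^sup>2 * (2 * w t x * pdir (axis i 1) w t x)) - Z i t x / Fr\<^sup>2) (at 0)"
        by (simp add: Z_def mult_ac)
    qed
    then show ?thesis unfolding e by (simp only: Nf_def)
  qed
  have kf: "(\<lambda>s y. ptime \<zeta> s y + v s y \<bullet> grad \<zeta> s y) = (\<lambda>s y. w s y * ?P s y)"
    using kinematic by (simp add: fun_eq_iff)
  have hK: "pdir (axis i 1) (\<lambda>s y. ptime \<zeta> s y + v s y \<bullet> grad \<zeta> s y) t x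
     = pdir (axis i 1) (ptime \<zeta>) t x + (pdir (axis i 1) (\<lambda>s y. v s y $ 1) t x * Z 1 t x + v t x $ 1 * pdir (axis i 1) (Z 1) t x)
       + (pdir (axis i 1) (\<lambda>s y. v s y $ 2) t x * Z 2 t x + v t x $ 2 * pdir (axis i 1) (Z 2) t x)"
  proof -
    have "pdir (axis i 1) (\<lambda>s y. ptime \<zeta> s y + v s y \<bullet> grad \<zeta> s y) t x
       = pdir (axis i 1) (\<lambda>s y. ptime \<zeta> s y + (v s y $ 1 * Z 1 s y + v s y $ 2 * Z 2 s y)) t x"
      by (rule pdir_cong) (simp add: inner2 gZ)
    also have "\<dots> = pdir (axis i 1) (ptime \<zeta>) t x + (pdir (axis i 1) (\<lambda>s y. v s y $ 1) t x * Z 1 t x + v t x $ 1 * pdir (axis i 1) (Z 1) t x)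
       + (pdir (axis i 1) (\<lambda>s y. v s y $ 2) t x * Z 2 t x + v t x $ 2 * pdir (axis i 1) (Z 2) t x)"
      by (rule pdir_DERIV_eq)
         (auto intro!: derivative_eq_intros aX[OF smV] aX[OF smZt] aX[OF smZ] simp: algebra_simps)
    finally show ?thesis .
  qed
  have hK2: "pdir (axis i 1) (\<lambda>s y. w s y * ?P s y) t x = pdir (axis i 1) w t x * ?P t x + w t x * pdir (axis i 1) ?P t x"
    by (rule pdir_DERIV_eq) (auto intro!: derivative_eq_intros aX[OF smw] PX simp: algebra_simps)
  have hP2: "pdir (axis i 1) (\<lambda>t x. (?P t x)^2) t x = 2 * ?P t x * pdir (axis i 1) ?P t x"
    by (rule pdir_DERIV_eq) (auto intro!: derivative_eq_intros PX simp: algebra_simps)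
  have C1: "pdir (axis i 1) (ptime \<zeta>) t x = ptime (Z i) t x"
    by (simp add: Z_def clair_time[OF smz B])
  have C2: "pdir (axis i 1) (Z k) t x = pdir (axis k 1) (Z i) t x" for k
    by (simp add: Z_def clair_space[OF smz])
  have E3: "ptime (Z i) t x + (pdir (axis i 1) (\<lambda>s y. v s y $ 1) t x * Z 1 t x + v t x $ 1 * pdir (axis 1 1) (Z i) t x)
       + (pdir (axis i 1) (\<lambda>s y. v s y $ 2) t x * Z 2 t x + v t x $ 2 * pdir (axis 2 1) (Z i) t x)
     = pdir (axis i 1) w t x * ?P t x + w t x * pdir (axis i 1) ?P t x"
    using hK hK2 kf C1 C2 by simp
  note m0 = momentum[rule_format, of t x]
  note m1 = arg_cong[where f="\<lambda>z. z $ i", OF m0]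
  note m2 = m1[unfolded vector_add_component]
  note m3 = m2[unfolded ptimev_def lie1_def vec_lambda_beta grad_nth sum_2]
  note m4 = m3[unfolded hAt hAx hpi]
  note vt = vertical[rule_format, of t x, unfolded inner2 grad_nth]
  have w_eq: "w t x = ?W t x * ?P t x" using Pnz[of t x] by (simp add: wtil_def)
  note m5 = m4[unfolded vector_add_component vector_scaleR_component gZ real_scaleR_def]
  have Dp: "D t x > 0" using Dpos by blast
  show ?thesis
    apply (simp only: vector_minus_component vector_scaleR_component gZ real_scaleR_def)
    apply (simp only: grad_nth hP2)
    by (rule alg[OF par(1) par(2) Dp m5 vt E3 w_eq])
qed

theorem mainTheorem4:
  fixes v :: "real \<Rightarrow> real^2 \<Rightarrow> real^2"
    and D \<zeta> w :: "real \<Rightarrow> real^2 \<Rightarrow> real"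
    and \<sigma> Fr \<epsilon> :: real
    and c :: "real \<Rightarrow> real \<Rightarrow> real^2"
  assumes par: "\<sigma> > 0" "Fr > 0" "0 \<le> \<epsilon>" "\<epsilon> \<le> 1"
    and smooth: "\<forall>i. smooth_st Basis2 (\<lambda>t x. v t x $ i)" "smooth_st Basis2 D"
        "smooth_st Basis2 \<zeta>" "smooth_st Basis2 w"
    and Dpos: "\<forall>t x. D t x > 0"
    and momentum: "\<forall>t x.
        ptimev (\<lambda>t x. v t x + (\<sigma>^2 * wtil \<sigma> \<epsilon> \<zeta> w t x) *\<^sub>R grad \<zeta> t x) t x
      + lie1 v (\<lambda>t x. v t x + (\<sigma>^2 * wtil \<sigma> \<epsilon> \<zeta> w t x) *\<^sub>R grad \<zeta> t x) t x
      = grad (\<lambda>t x. (1/2) * ((norm (v t x))^2 + \<sigma>^2 * (w t x)^2) - \<zeta> t x / Fr^2) t x"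
    and mass: "\<forall>t x. ptime D t x + divg (\<lambda>t x. D t x *\<^sub>R v t x) t x = 0"
    and kinematic: "\<forall>t x. ptime \<zeta> t x + v t x \<bullet> grad \<zeta> t x = w t x * Phi \<sigma> \<epsilon> \<zeta> t x"
    and vertical: "\<forall>t x. ptime (wtil \<sigma> \<epsilon> \<zeta> w) t x + v t x \<bullet> grad (wtil \<sigma> \<epsilon> \<zeta> w) t x
        = - 1 / (\<sigma>^2 * Fr^2)
          + (2 * \<epsilon> * \<sigma>^2 / D t x)
            * divg (\<lambda>t x. (D t x * wtil \<sigma> \<epsilon> \<zeta> w t x * w t x) *\<^sub>R grad \<zeta> t x) t x"
    and loop_smooth: "\<forall>i. smooth_st {1::real} (\<lambda>t s. c t s $ i)"
    and loop_closed: "\<forall>t. c t 0 = c t 1"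
    and material: "\<forall>t s. ((\<lambda>\<tau>. c \<tau> s) has_vector_derivative v t (c t s)) (at t)"
  shows "\<forall>t. ((\<lambda>t. loop_int v c t) has_real_derivative
      loop_int (\<lambda>t x.
          (1/2) *\<^sub>R grad (\<lambda>t x. (norm (v t x))^2) t x
        - ((\<sigma>^2 / 2) * (wtil \<sigma> \<epsilon> \<zeta> w t x)^2) *\<^sub>R grad (\<lambda>t x. (Phi \<sigma> \<epsilon> \<zeta> t x)^2) t x
        - ((2 * \<epsilon> * \<sigma>^4 / D t x)
            * divg (\<lambda>t x. (D t x * wtil \<sigma> \<epsilon> \<zeta> w t x * w t x) *\<^sub>R grad \<zeta> t x) t x)
            *\<^sub>R grad \<zeta> t x) c t) (at t)"
proof
  fix t0 :: real
  have B: "axis k 1 \<in> Basis2" for k :: 2 by blast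
  have Bc: "(1::real) \<in> {1::real}" by simp
  have smV: "smooth_st Basis2 (\<lambda>t x. v t x $ k)" for k using smooth(1) by blast
  have smc: "smooth_st {1::real} (\<lambda>t s. c t s $ k)" for k using loop_smooth by blast
  define cd where "cd k t s = pdir (1::real) (\<lambda>t s. c t s $ k) t s" for k t s
  define vd where "vd t s = (\<chi> k. cd k t s)" for t s
  have smcd: "smooth_st {1::real} (cd k)" for k
    unfolding cd_def[abs_def] by (rule sm_pdir[OF smc Bc])
  have dS: "((\<lambda>s. c t s $ k) has_real_derivative cd k t s) (at s)" for k t s
    using pdir_DERIV[OF smc Bc, where t=t and x=0 and a=s] by (simp add: cd_def)
  have vdc: "(c t has_vector_derivative vd t s) (at s)" for t s
    by (rule vd_vec) (simp add: vd_def dS)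
  have vdeq: "vector_derivative (c t) (at s) = vd t s" for t s
    by (rule vector_derivative_at[OF vdc])
  have ptc: "ptime (\<lambda>t s. c t s $ k) t s = v t (c t s) $ k" for k t s
    by (rule ptime_DERIV_eq) (rule vd_comp[OF material[rule_format]])
  have ptc_fun: "ptime (\<lambda>t s. c t s $ k) = (\<lambda>t s. v t (c t s) $ k)" for k
    by (intro ext) (rule ptc)
  have K1: "((\<lambda>\<tau>. v \<tau> (c \<tau> s) $ k) has_real_derivative
      (1 * ptime (\<lambda>t x. v t x $ k) t (c t s) + (v t (c t s) $ 1 * pdir (axis 1 1) (\<lambda>t x. v t x $ k) t (c t s)
        + v t (c t s) $ 2 * pdir (axis 2 1) (\<lambda>t x. v t x $ k) t (c t s)))) (at t)" for k t s
    by (rule chain_path[OF smV DERIV_ident material[rule_format]])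
  have K2: "((\<lambda>\<sigma>. v t (c t \<sigma>) $ k) has_real_derivative
      (0 * ptime (\<lambda>t x. v t x $ k) t (c t s) + (vd t s $ 1 * pdir (axis 1 1) (\<lambda>t x. v t x $ k) t (c t s)
        + vd t s $ 2 * pdir (axis 2 1) (\<lambda>t x. v t x $ k) t (c t s)))) (at s)" for k t s
    by (rule chain_path[OF smV DERIV_const vdc])
  have K3: "((\<lambda>\<tau>. cd k \<tau> s) has_real_derivative
      (cd 1 t s * pdir (axis 1 1) (\<lambda>t x. v t x $ k) t (c t s)
        + cd 2 t s * pdir (axis 2 1) (\<lambda>t x. v t x $ k) t (c t s))) (at t)" for k t s
  proof -
    have "ptime (cd k) t s = pdir 1 (ptime (\<lambda>t s. c t s $ k)) t s"
      using clair_time[OF smc[of k] Bc, of t s] by (simp add: cd_def[abs_def])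
    also have "\<dots> = pdir 1 (\<lambda>t s. v t (c t s) $ k) t s" by (simp add: ptc_fun)
    also have "\<dots> = cd 1 t s * pdir (axis 1 1) (\<lambda>t x. v t x $ k) t (c t s)
        + cd 2 t s * pdir (axis 2 1) (\<lambda>t x. v t x $ k) t (c t s)"
    proof (rule pdir_DERIV_eq)
      show "((\<lambda>h. v t (c t (s + h *\<^sub>R 1)) $ k) has_real_derivative
         cd 1 t s * pdir (axis 1 1) (\<lambda>t x. v t x $ k) t (c t s) + cd 2 t s * pdir (axis 2 1) (\<lambda>t x. v t x $ k) t (c t s)) (at 0)"
        using K2[of t k s] DERIV_shift[of "\<lambda>\<sigma>. v t (c t \<sigma>) $ k" _ 0 s]
        by (simp add: add.commute vd_def)
    qed
    finally show ?thesis using ptime_DERIV[OF smcd[of k], of s t] by simp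
  qed
  define F where "F t s = v t (c t s) $ 1 * cd 1 t s + v t (c t s) $ 2 * cd 2 t s" for t s
  define Fx where "Fx t s = ((1 * ptime (\<lambda>t x. v t x $ 1) t (c t s) + (v t (c t s) $ 1 * pdir (axis 1 1) (\<lambda>t x. v t x $ 1) t (c t s)
        + v t (c t s) $ 2 * pdir (axis 2 1) (\<lambda>t x. v t x $ 1) t (c t s))) * cd 1 t s + (cd 1 t s * pdir (axis 1 1) (\<lambda>t x. v t x $ 1) t (c t s)
        + cd 2 t s * pdir (axis 2 1) (\<lambda>t x. v t x $ 1) t (c t s)) * v t (c t s) $ 1)
     + ((1 * ptime (\<lambda>t x. v t x $ 2) t (c t s) + (v t (c t s) $ 1 * pdir (axis 1 1) (\<lambda>t x. v t x $ 2) t (c t s)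
        + v t (c t s) $ 2 * pdir (axis 2 1) (\<lambda>t x. v t x $ 2) t (c t s))) * cd 2 t s + (cd 1 t s * pdir (axis 1 1) (\<lambda>t x. v t x $ 2) t (c t s)
        + cd 2 t s * pdir (axis 2 1) (\<lambda>t x. v t x $ 2) t (c t s)) * v t (c t s) $ 2)" for t s
  have Fd: "((\<lambda>\<tau>. F \<tau> s) has_real_derivative Fx \<tau> s) (at \<tau>)" for \<tau> s
    unfolding F_def Fx_def by (intro DERIV_add DERIV_mult K1 K3)
  have loop_F: "loop_int v c = (\<lambda>t. integral {0..1} (F t))"
    by (simp add: loop_int_def vdeq inner2 vd_def F_def[abs_def] fun_eq_iff)
  have cc0: "continuous_on UNIV (\<lambda>p::real\<times>real. \<chi> k. c (fst p) (snd p) $ k)"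
    by (intro continuous_on_vec_lambda sm_cont[OF smc])
  have cc: "continuous_on UNIV (\<lambda>p::real\<times>real. c (fst p) (snd p))"
    using cc0 by (simp add: vec_lambda_eta)
  have cgam: "continuous_on UNIV (\<lambda>p::real\<times>real. (fst p, c (fst p) (snd p)))"
    by (intro continuous_on_Pair continuous_intros cc)
  have cg: "continuous_on UNIV (\<lambda>p. g (fst p) (c (fst p) (snd p)))" if "smooth_st Basis2 g" for g
    using cont_comp[OF sm_cont[OF that] cgam] by simp
  have ccd: "continuous_on UNIV (\<lambda>p. cd k (fst p) (snd p))" for k
    by (rule sm_cont[OF smcd])
  have cFx: "continuous_on UNIV (\<lambda>p. Fx (fst p) (snd p))"
  proof -
    have a1: "continuous_on UNIV (\<lambda>p. v (fst p) (c (fst p) (snd p)) $ k)" for k using cg[OF smV] .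
    have a2: "continuous_on UNIV (\<lambda>p. ptime (\<lambda>t x. v t x $ k) (fst p) (c (fst p) (snd p)))" for k
      using cg[OF sm_ptime[OF smV]] .
    have a3: "continuous_on UNIV (\<lambda>p. pdir (axis j 1) (\<lambda>t x. v t x $ k) (fst p) (c (fst p) (snd p)))" for j k
      using cg[OF sm_pdir[OF smV B]] .
    show ?thesis unfolding Fx_def
      by (intro continuous_on_add continuous_on_mult continuous_on_const a1 a2 a3 ccd)
  qed
  have cF: "continuous_on UNIV (\<lambda>p. F (fst p) (snd p))"
    unfolding F_def by (intro continuous_intros cg[OF smV] ccd)
  have intF: "F \<tau> integrable_on cbox 0 1" for \<tau>
  proof -
    have "continuous_on {0..1} (F \<tau>)"
      using cont_comp[OF cF, of "{0..1}" "\<lambda>s. (\<tau>, s)"] by (simp add: continuous_on_Pair continuous_on_id continuous_on_const)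
    then show ?thesis by (simp add: box_real integrable_continuous_real)
  qed
  have cFx2: "continuous_on (UNIV \<times> cbox 0 1) (\<lambda>(x, t). Fx x t)"
    using continuous_on_subset[OF cFx] by (simp add: case_prod_unfold)
  have L: "((\<lambda>\<tau>. integral (cbox 0 1) (F \<tau>)) has_field_derivative integral (cbox 0 1) (Fx t0)) (at t0 within UNIV)"
    by (rule leibniz_rule_field_derivative[OF _ intF cFx2]) (auto simp: Fd)
  have L2: "((\<lambda>t. loop_int v c t) has_real_derivative integral {0..1} (Fx t0)) (at t0)"
    using L by (simp add: box_real loop_F)
  have eqs: "Fx t0 s = (\<lambda>t x.
          (1/2) *\<^sub>R grad (\<lambda>t x. (norm (v t x))^2) t x
        - ((\<sigma>^2 / 2) * (wtil \<sigma> \<epsilon> \<zeta> w t x)^2) *\<^sub>R grad (\<lambda>t x. (Phi \<sigma> \<epsilon> \<zeta> t x)^2) t x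
        - ((2 * \<epsilon> * \<sigma>^4 / D t x)
            * divg (\<lambda>t x. (D t x * wtil \<sigma> \<epsilon> \<zeta> w t x * w t x) *\<^sub>R grad \<zeta> t x) t x)
            *\<^sub>R grad \<zeta> t x) t0 (c t0 s) \<bullet> vector_derivative (c t0) (at s)" for s
  proof -
    note P1 = pointwise[OF par(1-3) smooth(1) smooth(3) smooth(4) Dpos momentum kinematic vertical, of 1 t0 "c t0 s"]
    note P2 = pointwise[OF par(1-3) smooth(1) smooth(3) smooth(4) Dpos momentum kinematic vertical, of 2 t0 "c t0 s"]
    show ?thesis
      unfolding vdeq inner2 vd_def vec_lambda_beta
      apply (simp only: P1[symmetric] P2[symmetric])
      by (simp add: Fx_def algebra_simps)
  qed
  have "integral {0..1} (Fx t0) = loop_int (\<lambda>t x.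
          (1/2) *\<^sub>R grad (\<lambda>t x. (norm (v t x))^2) t x
        - ((\<sigma>^2 / 2) * (wtil \<sigma> \<epsilon> \<zeta> w t x)^2) *\<^sub>R grad (\<lambda>t x. (Phi \<sigma> \<epsilon> \<zeta> t x)^2) t x
        - ((2 * \<epsilon> * \<sigma>^4 / D t x)
            * divg (\<lambda>t x. (D t x * wtil \<sigma> \<epsilon> \<zeta> w t x * w t x) *\<^sub>R grad \<zeta> t x) t x)
            *\<^sub>R grad \<zeta> t x) c t0"
    unfolding loop_int_def by (rule integral_cong) (rule eqs)
  then show "((\<lambda>t. loop_int v c t) has_real_derivative
      loop_int (\<lambda>t x.
          (1/2) *\<^sub>R grad (\<lambda>t x. (norm (v t x))^2) t x
        - ((\<sigma>^2 / 2) * (wtil \<sigma> \<epsilon> \<zeta> w t x)^2) *\<^sub>R grad (\<lambda>t x. (Phi \<sigma> \<epsilon> \<zeta> t x)^2) t x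
        - ((2 * \<epsilon> * \<sigma>^4 / D t x)
            * divg (\<lambda>t x. (D t x * wtil \<sigma> \<epsilon> \<zeta> w t x * w t x) *\<^sub>R grad \<zeta> t x) t x)
            *\<^sub>R grad \<zeta> t x) c t0) (at t0)"
    using L2 by simp
qed

end
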